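(* Let $a\in\mathbb{C}$ with $2a\notin\{0,-1,-2,\ldots\}$. Then \[ {}_5F_4\!\left(\left.{1,\,1,\,1-2a,\,\frac{7+3a\pm\sqrt{9a^2+2a-1}}{5}\atop \frac32,\,1+2a,\,\frac{2+3a\pm\sqrt{9a^2+2a-1}}{5}}\right|-\frac14\right)=\frac{4a}{1+2a}. \]
   Context: ${}_pF_q\left(\left.{a_1,\ldots,a_p\atop b_1,\ldots,b_q}\right|z\right)=\sum_{n\ge0}\frac{(a_1)_n\cdots(a_p)_n}{(b_1)_n\cdots(b_q)_n}\frac{z^n}{n!}$ with $(x)_n=x(x+1)\cdots(x+n-1)$. A parameter written with $\pm$ stands for the two parameters obtained with $+$ and with $-$. *)

theory Defs
  imports "HOL-Analysis.Analysis"
begin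

definition hypergeom :: "complex list \<Rightarrow> complex list \<Rightarrow> complex \<Rightarrow> complex" where
  "hypergeom as bs z =
     (\<Sum>n. (prod_list (map (\<lambda>a. pochhammer a n) as) / prod_list (map (\<lambda>b. pochhammer b n) bs))
           * z ^ n / fact n)"

end

theory Submission
  imports Defs
begin

lemma nz_shift: "(x::complex) \<notin> \<int>\<^sub>\<le>\<^sub>0 \<Longrightarrow> x + of_nat n \<noteq> 0"
  using plus_of_nat_eq_0_imp by blast

lemma poch_nz: "(x::complex) \<notin> \<int>\<^sub>\<le>\<^sub>0 \<Longrightarrow> pochhammer x n \<noteq> 0"
  by (auto simp: pochhammer_eq_0_iff)

lemma poch_shift: "x * pochhammer (x + 1) n = (x + of_nat n) * pochhammer (x::complex) n"
  by (metis pochhammer_rec pochhammer_rec')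

lemma poch_shift': "(x::complex) \<noteq> 0 \<Longrightarrow> pochhammer (x + 1) n = pochhammer x n * (x + of_nat n) / x"
  using poch_shift[of x n] by (simp add: field_simps)

lemma cancel_aux: "(c::complex) \<noteq> 0 \<Longrightarrow> d \<noteq> 0 \<Longrightarrow> U * (X * (-1/4) / (c * d)) * (4 * c * d) = - U * X"
  by (simp add: field_simps)

lemma ratio_aux:
  fixes x b :: real
  assumes "b \<ge> 0" "x \<ge> 3 + 3 * b"
  shows "(x + 1) * (x + 1 + b) \<le> (2 * x + 1) * (x - b)"
proof -
  have "x * x \<ge> (3 + 3 * b) * x" using assms by (intro mult_right_mono) auto
  then show ?thesis using assms by (simp add: algebra_simps)
qed

theorem corollary10:
  fixes a :: complex
  assumes "2 * a \<notin> \<int>\<^sub>\<le>\<^sub>0"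
    and "(2 + 3 * a + csqrt (9 * a\<^sup>2 + 2 * a - 1)) / 5 \<notin> \<int>\<^sub>\<le>\<^sub>0"
    and "(2 + 3 * a - csqrt (9 * a\<^sup>2 + 2 * a - 1)) / 5 \<notin> \<int>\<^sub>\<le>\<^sub>0"
  shows "hypergeom
           [1, 1, 1 - 2 * a,
            (7 + 3 * a + csqrt (9 * a\<^sup>2 + 2 * a - 1)) / 5,
            (7 + 3 * a - csqrt (9 * a\<^sup>2 + 2 * a - 1)) / 5]
           [3 / 2, 1 + 2 * a,
            (2 + 3 * a + csqrt (9 * a\<^sup>2 + 2 * a - 1)) / 5,
            (2 + 3 * a - csqrt (9 * a\<^sup>2 + 2 * a - 1)) / 5]
           (- 1 / 4)
         = 4 * a / (1 + 2 * a)"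
proof -
  define s where "s = csqrt (9 * a\<^sup>2 + 2 * a - 1)"
  define fp where "fp = (2 + 3 * a + s) / 5"
  define fm where "fm = (2 + 3 * a - s) / 5"
  have s2: "s^2 = 9 * a\<^sup>2 + 2 * a - 1" unfolding s_def by simp
  have fp: "fp \<notin> \<int>\<^sub>\<le>\<^sub>0" and fm: "fm \<notin> \<int>\<^sub>\<le>\<^sub>0" using assms(2,3) by (simp_all add: fp_def fm_def s_def)
  have fp0: "fp \<noteq> 0" and fm0: "fm \<noteq> 0" using fp fm by auto
  have ep: "(7 + 3 * a + s) / 5 = fp + 1" and em: "(7 + 3 * a - s) / 5 = fm + 1"
    by (simp_all add: fp_def fm_def field_simps)
  have a2: "\<And>n. 2 * a + of_nat n \<noteq> 0" using assms(1) nz_shift by blast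
  have b: "\<And>n. pochhammer (1 + 2 * a) n \<noteq> 0"
  proof
    fix n assume "pochhammer (1 + 2 * a) n = 0"
    then obtain k where "1 + 2 * a = - of_nat k" by (auto simp: pochhammer_eq_0_iff)
    have "2 * a + of_nat (Suc k) = (1 + 2 * a) + of_nat k" by simp
    also have "\<dots> = - of_nat k + of_nat k" using \<open>1 + 2 * a = - of_nat k\<close> by (rule arg_cong)
    finally have "2 * a + of_nat (Suc k) = 0" by simp
    then show False using a2 by blast
  qed
  have b': "\<And>n. 1 + 2 * a + of_nat n \<noteq> 0"
    using a2 by (metis add.commute add.left_commute of_nat_Suc)
  have h32: "\<And>n. pochhammer (3/2::complex) n \<noteq> 0"
    by (auto simp: pochhammer_eq_0_iff dest!: arg_cong[where f=Re])
  have h32': "\<And>n. 3/2 + of_nat n \<noteq> (0::complex)"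
    by (auto dest!: arg_cong[where f=Re])
  define u where "u n = fact n * pochhammer (1 - 2 * a) n * (-1/4)^n / (pochhammer (3/2) n * pochhammer (1 + 2 * a) n)" for n
  define P where "P n = 5 * (of_nat n)^2 + (4 + 6 * a) * of_nat n + 1 + 2 * a" for n
  define G where "G n = u n * (2 * (2 * of_nat n + 1) * (of_nat n + 2 * a))" for n
  have h1: "(prod_list (map (\<lambda>a. pochhammer a n) [1,1,1-2*a,fp+1,fm+1]) / prod_list (map (\<lambda>a. pochhammer a n) [3/2, 1+2*a, fp, fm])) * (-1/4)^n / fact n
      = u n * ((fp + of_nat n) * (fm + of_nat n) / (fp * fm))" for n
    using poch_nz[OF fp, of n] poch_nz[OF fm, of n] h32[of n] b[of n] fp0 fm0
    by (simp only: list.map prod_list.Cons prod_list.Nil mult_1_right poch_shift'[OF fp0] 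
       poch_shift'[OF fm0] pochhammer_fact[symmetric] u_def) (simp add: field_simps)
  have ff: "fp * fm = (1 + 2 * a) / 5"
    unfolding fp_def fm_def using s2 by (simp add: field_simps power2_eq_square) algebra
  have ff2: "(fp + of_nat n) * (fm + of_nat n) = P n / 5" for n
    unfolding fp_def fm_def P_def using s2 by (simp add: field_simps power2_eq_square) algebra
  have h2: "(fp + of_nat n) * (fm + of_nat n) / (fp * fm) = P n / (1 + 2 * a)" for n
    using b'[of 0] by (simp add: ff ff2)
  have h3: "u (Suc n) = u n * ((of_nat n + 1) * (1 - 2 * a + of_nat n) * (-1/4) / ((3/2 + of_nat n) * (1 + 2 * a + of_nat n)))" for n
    using h32[of n] b[of n] h32'[of n] b'[of n]
    by (simp add: u_def pochhammer_rec' field_simps)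
  have h4': "G (Suc n) = - u n * (of_nat n + 1) * (of_nat n + 1 - 2 * a)" for n
  proof -
    have e1: "2 * (2 * (of_nat n + 1) + 1) = 4 * (3/2 + (of_nat n::complex))" by simp
    have e2: "(of_nat n + 1) + 2 * a = 1 + 2 * a + of_nat n" by simp
    have "G (Suc n) = u (Suc n) * (2 * (2 * (of_nat n + 1) + 1) * ((of_nat n + 1) + 2 * a))"
      by (simp add: G_def)
    also have "\<dots> = u (Suc n) * (4 * (3/2 + of_nat n) * (1 + 2 * a + of_nat n))"
      by (simp only: e1 e2)
    also have "\<dots> = - u n * ((of_nat n + 1) * (1 - 2 * a + of_nat n))"
      unfolding h3 by (rule cancel_aux[OF h32'[of n] b'[of n]])
    also have "\<dots> = - u n * (of_nat n + 1) * (of_nat n + 1 - 2 * a)"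
      by (simp add: algebra_simps)
    finally show ?thesis .
  qed
  have h4: "G n - G (Suc n) = u n * P n" for n
    unfolding h4' by (simp add: G_def P_def algebra_simps power2_eq_square)
  define b where "b = norm (2 * a)"
  have b0: "b \<ge> 0" by (simp add: b_def)
  define N where "N = nat \<lceil>3 + 3 * b\<rceil>"
  have rat: "norm (G (Suc n)) \<le> 1/2 * norm (G n)" if "n \<ge> N" for n
  proof -
    define x where "x = real n"
    have x: "x \<ge> 3 + 3 * b" using that unfolding N_def x_def by linarith
    have n1: "norm (of_nat n + 1 - 2 * a) \<le> x + 1 + b"
    proof -
      have "norm ((of_nat (Suc n)::complex) - 2 * a) \<le> norm (of_nat (Suc n)::complex) + norm (2 * a)"
        by (rule norm_triangle_ineq4)
      then show ?thesis unfolding norm_of_nat by (simp add: x_def b_def algebra_simps)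
    qed
    have n2: "x - b \<le> norm (of_nat n + 2 * a)"
    proof -
      have "norm (of_nat n :: complex) - norm (2 * a) \<le> norm (of_nat n + 2 * a)"
        by (rule norm_diff_ineq)
      then show ?thesis by (simp add: x_def b_def)
    qed
    have nn: "norm (of_nat n + 1 :: complex) = real n + 1"
      using norm_of_nat[of "Suc n", where 'a=complex] by (simp add: add.commute)
    have nn2: "norm (2 * of_nat n + 1 :: complex) = 2 * real n + 1"
      using norm_of_nat[of "2 * n + 1", where 'a=complex] by (simp add: add.commute)
    have "(x + 1) * norm (of_nat n + 1 - 2 * a) \<le> (x + 1) * (x + 1 + b)"
      using n1 x_def by (intro mult_left_mono) auto
    also have "\<dots> \<le> (2 * x + 1) * (x - b)" by (rule ratio_aux[OF b0 x])
    also have "\<dots> \<le> (2 * x + 1) * norm (of_nat n + 2 * a)"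
      using n2 x_def by (intro mult_left_mono) auto
    finally have key: "(x + 1) * norm (of_nat n + 1 - 2 * a) \<le> (2 * x + 1) * norm (of_nat n + 2 * a)" .
    have "norm (G (Suc n)) = norm (u n) * ((x + 1) * norm (of_nat n + 1 - 2 * a))"
      unfolding h4' x_def using nn by (simp add: norm_mult norm_minus_cancel)
    also have "\<dots> \<le> norm (u n) * ((2 * x + 1) * norm (of_nat n + 2 * a))"
      by (intro mult_left_mono key) auto
    also have "\<dots> = 1/2 * norm (G n)"
      unfolding G_def x_def by (simp only: norm_mult nn2 norm_numeral)
    finally show ?thesis .
  qed
  have "summable G" by (rule summable_ratio_test[of "1/2" N]) (use rat in auto)
  then have G0: "G \<longlonglongrightarrow> 0" by (rule summable_LIMSEQ_zero)
  have "(\<lambda>n. G n - G (Suc n)) sums (G 0 - 0)" by (rule telescope_sums'[OF G0])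
  then have "(\<lambda>n. (G n - G (Suc n)) / (1 + 2 * a)) sums (G 0 / (1 + 2 * a))"
    using sums_divide by fastforce
  moreover have "G 0 = 4 * a" by (simp add: G_def u_def)
  moreover have "(\<lambda>n. (G n - G (Suc n)) / (1 + 2 * a)) = (\<lambda>n. (prod_list (map (\<lambda>a. pochhammer a n) [1,1,1-2*a,fp+1,fm+1]) / prod_list (map (\<lambda>a. pochhammer a n) [3/2, 1+2*a, fp, fm])) * (-1/4)^n / fact n)"
    by (rule ext) (simp only: h1 h2 h4 times_divide_eq_right)
  ultimately have S: "(\<lambda>n. (prod_list (map (\<lambda>a. pochhammer a n) [1,1,1-2*a,fp+1,fm+1]) / prod_list (map (\<lambda>a. pochhammer a n) [3/2, 1+2*a, fp, fm])) * (-1/4)^n / fact n) sums (4 * a / (1 + 2 * a))"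
    by simp
  show ?thesis
    unfolding hypergeom_def s_def[symmetric] ep em fp_def[symmetric] fm_def[symmetric]
    using S by (simp add: sums_iff)
qed
end
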